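(* Let $p\in[1,\infty]$, $\mu_i\in\mathcal P_p(X_i)$, $i=1,\dots,N$, and let $c,\tilde c:X\to[0,\infty)$ satisfy the growth condition of order $p$. Let $\pi^*,\tilde\pi^*$ be the optimizers of $S_{\rm ent}(\mu_1,\dots,\mu_N,c)$ and $S_{\rm ent}(\mu_1,\dots,\mu_N,\tilde c)$. Then $$D_{\rm KL}(\pi^*,\tilde\pi^* )+D_{\rm KL}(\tilde\pi^*,\pi^* )\le\int(c-\tilde c)\,d(\tilde\pi^*-\pi^* ).$$
   Context: $(X_i,d_{X_i})$ Polish, $X=\prod_iX_i$, $d_{X,p}(x,y)=(\sum_id_{X_i}(x_i,y_i)^p)^{1/p}$ ($\max$ for $p=\infty$); $\mathcal P_p$ finite $p$-th moment (bounded support if $p=\infty$). Growth of order $p$: $|c(x)|\le C(1+d_{X,p}(x,\hat x)^p)$ for some $C,\hat x$ ($c$ bounded if $p=\infty$). $S_{\rm ent}(\mu_1,\dots,\mu_N,c)=\inf_{\pi\in\Pi(\mu_1,\dots,\mu_N)}\int c\,d\pi+D_{\rm KL}(\pi,\mu_1\otimes\cdots\otimes\mu_N)$, $\Pi$ = couplings, unique optimizer. *)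

theory Defs
  imports "HOL-Probability.Probability"
begin

definition borel_of :: "'a topology \<Rightarrow> 'a measure" where
  "borel_of T = sigma (topspace T) {U. openin T U}"

definition polish_metric :: "'a set \<Rightarrow> ('a \<Rightarrow> 'a \<Rightarrow> real) \<Rightarrow> bool" where
  "polish_metric S d \<longleftrightarrow> Metric_space S d \<and> Metric_space.mcomplete S d
      \<and> separable_space (Metric_space.mtopology S d)"

definition metric_borel :: "'a set \<Rightarrow> ('a \<Rightarrow> 'a \<Rightarrow> real) \<Rightarrow> 'a measure" where
  "metric_borel S d = borel_of (Metric_space.mtopology S d)"

text \<open>P_p(X_i): Borel probability measures with finite p-th moment (p < infinity),
  resp. bounded support (p = infinity).  p is an extended real with p \<ge> 1.\<close>
definition P_p :: "ereal \<Rightarrow> 'a set \<Rightarrow> ('a \<Rightarrow> 'a \<Rightarrow> real) \<Rightarrow> 'a measure \<Rightarrow> bool" where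
  "P_p p S d \<mu> \<longleftrightarrow> prob_space \<mu> \<and> sets \<mu> = sets (metric_borel S d) \<and>
     (if p = \<infinity> then (\<exists>x0\<in>S. \<exists>r. emeasure \<mu> (S - Metric_space.mcball S d x0 r) = 0)
      else (\<exists>x0\<in>S. (\<integral>\<^sup>+ x. ennreal (d x x0 powr real_of_ereal p) \<partial>\<mu>) < \<infinity>))"

text \<open>p-th power of the product metric d_{X,p}(x,y)^p = sum_i d_i(x_i,y_i)^p (p finite).\<close>
definition dXp_pow :: "nat \<Rightarrow> (nat \<Rightarrow> 'a \<Rightarrow> 'a \<Rightarrow> real) \<Rightarrow> real \<Rightarrow> (nat \<Rightarrow> 'a) \<Rightarrow> (nat \<Rightarrow> 'a) \<Rightarrow> real" where
  "dXp_pow N d p x y = (\<Sum>i<N. d i (x i) (y i) powr p)"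

definition growth_p :: "ereal \<Rightarrow> nat \<Rightarrow> (nat \<Rightarrow> 'a set) \<Rightarrow> (nat \<Rightarrow> 'a \<Rightarrow> 'a \<Rightarrow> real)
    \<Rightarrow> ((nat \<Rightarrow> 'a) \<Rightarrow> real) \<Rightarrow> bool" where
  "growth_p p N S d c \<longleftrightarrow>
     (if p = \<infinity> then (\<exists>C. \<forall>x\<in>(\<Pi>\<^sub>E i\<in>{..<N}. S i). \<bar>c x\<bar> \<le> C)
      else (\<exists>C. \<exists>xh\<in>(\<Pi>\<^sub>E i\<in>{..<N}. S i). \<forall>x\<in>(\<Pi>\<^sub>E i\<in>{..<N}. S i).
               \<bar>c x\<bar> \<le> C * (1 + dXp_pow N d (real_of_ereal p) x xh)))"

text \<open>Kullback-Leibler divergence D_KL(P,Q) with values in [0,\<infinity>]: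
  \<infinity> unless P \<ll> Q, otherwise \<integral> f ln f dQ with f = dP/dQ.\<close>
definition KL_div :: "'a measure \<Rightarrow> 'a measure \<Rightarrow> ereal" where
  "KL_div P Q = (if sets P = sets Q \<and> absolutely_continuous Q P then
     (let f = (\<lambda>x. enn2real (RN_deriv Q P x)); g = (\<lambda>x. f x * ln (f x)) in
       enn2ereal (\<integral>\<^sup>+ x. ennreal (g x) \<partial>Q) - enn2ereal (\<integral>\<^sup>+ x. ennreal (- g x) \<partial>Q))
     else \<infinity>)"

definition couplings :: "nat \<Rightarrow> (nat \<Rightarrow> 'a measure) \<Rightarrow> (nat \<Rightarrow> 'a) measure set" where
  "couplings N \<mu> = {\<pi>. prob_space \<pi> \<and> sets \<pi> = sets (\<Pi>\<^sub>M i\<in>{..<N}. \<mu> i) \<and>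
      (\<forall>i<N. distr \<pi> (\<mu> i) (\<lambda>x. x i) = \<mu> i)}"

definition ent_obj :: "nat \<Rightarrow> (nat \<Rightarrow> 'a measure) \<Rightarrow> ((nat \<Rightarrow> 'a) \<Rightarrow> real) \<Rightarrow> (nat \<Rightarrow> 'a) measure \<Rightarrow> ereal" where
  "ent_obj N \<mu> c \<pi> = enn2ereal (\<integral>\<^sup>+ x. ennreal (c x) \<partial>\<pi>) + KL_div \<pi> (\<Pi>\<^sub>M i\<in>{..<N}. \<mu> i)"

definition S_ent :: "nat \<Rightarrow> (nat \<Rightarrow> 'a measure) \<Rightarrow> ((nat \<Rightarrow> 'a) \<Rightarrow> real) \<Rightarrow> ereal" where
  "S_ent N \<mu> c = (INF \<pi>\<in>couplings N \<mu>. ent_obj N \<mu> c \<pi>)"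

definition is_ent_optimizer :: "nat \<Rightarrow> (nat \<Rightarrow> 'a measure) \<Rightarrow> ((nat \<Rightarrow> 'a) \<Rightarrow> real) \<Rightarrow> (nat \<Rightarrow> 'a) measure \<Rightarrow> bool" where
  "is_ent_optimizer N \<mu> c \<pi> \<longleftrightarrow> \<pi> \<in> couplings N \<mu> \<and> ent_obj N \<mu> c \<pi> = S_ent N \<mu> c"

end

theory Submission
  imports Defs "HOL-Real_Asymp.Real_Asymp"
begin

definition xl :: "real \<Rightarrow> real" where "xl x = x * ln x"

lemma xl_ge: "0 \<le> x \<Longrightarrow> x - 1 \<le> xl x"
proof (cases "x = 0")
  case False
  assume "0 \<le> x"
  then have x: "x > 0" using False by auto
  have "ln (1/x) \<le> 1/x - 1" using x by (intro ln_le_minus_one) auto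
  then have "- ln x \<le> 1/x - 1" using x by (simp add: ln_div)
  then have "x * (- ln x) \<le> x * (1/x - 1)" using x by (intro mult_left_mono) auto
  then show ?thesis using x by (simp add: xl_def algebra_simps)
qed (simp add: xl_def)

lemma xl_tangent:
  assumes "0 \<le> x" "0 < y"
  shows "xl y + (ln y + 1) * (x - y) \<le> xl x"
proof (cases "x = 0")
  case True then show ?thesis using assms by (simp add: xl_def algebra_simps)
next
  case False
  then have x: "x > 0" using assms by auto
  have "ln (y/x) \<le> y/x - 1" using x assms by (intro ln_le_minus_one) auto
  then have "ln y - ln x \<le> y/x - 1" using x assms by (simp add: ln_div)
  then have "x * (ln y - ln x) \<le> x * (y/x - 1)" using x by (intro mult_left_mono) auto
  then show ?thesis using x by (simp add: xl_def algebra_simps)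
qed

lemma xl_convex:
  assumes "0 \<le> a" "0 \<le> b" "0 \<le> t" "t \<le> 1"
  shows "xl ((1-t)*a + t*b) \<le> (1-t) * xl a + t * xl b"
proof (cases "(1-t)*a + t*b = 0")
  case True
  have "a - 1 \<le> xl a" "b - 1 \<le> xl b" using assms xl_ge by auto
  have "(1-t)*a = 0" "t*b = 0" using True assms
    by (smt (verit) mult_nonneg_nonneg)+
  note z = this
  have e: "(1-t) * xl a = ((1-t)*a) * ln a" "t * xl b = (t*b) * ln b" by (simp_all add: xl_def)
  have "(1-t) * xl a + t * xl b = 0" unfolding e z by simp
  moreover have "xl ((1-t)*a + t*b) = 0" unfolding True by (simp add: xl_def)
  ultimately show ?thesis by simp
next
  case False
  define m where "m = (1-t)*a + t*b"
  have m: "m > 0" using False assms unfolding m_def by (smt (verit) mult_nonneg_nonneg)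
  have "(1-t) * (xl m + (ln m + 1) * (a - m)) \<le> (1-t) * xl a"
    using xl_tangent[OF assms(1) m] assms by (intro mult_left_mono) auto
  moreover have "t * (xl m + (ln m + 1) * (b - m)) \<le> t * xl b"
    using xl_tangent[OF assms(2) m] assms by (intro mult_left_mono) auto
  moreover have "(1-t) * (xl m + (ln m + 1) * (a - m)) + t * (xl m + (ln m + 1) * (b - m)) = xl m"
    unfolding m_def by (simp add: algebra_simps)
  ultimately show ?thesis unfolding m_def by linarith
qed

lemma xl_deriv: "0 < y \<Longrightarrow> (xl has_real_derivative (ln y + 1)) (at y)"
  unfolding xl_def by (auto intro!: derivative_eq_intros)

definition DD :: "real \<Rightarrow> real \<Rightarrow> real \<Rightarrow> real" where
  "DD t a b = (xl a + xl b - xl ((1-t)*a + t*b) - xl ((1-t)*b + t*a)) / t"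

definition kk :: "real \<Rightarrow> real \<Rightarrow> ennreal" where
  "kk a b = (if 0 < a \<and> 0 < b then ennreal ((b-a)*(ln b - ln a)) else if a = b then 0 else top)"

definition tn :: "nat \<Rightarrow> real" where "tn n = 1 / (real n + 2)"

lemma DD_sym: "DD t a b = DD t b a" unfolding DD_def by (simp add: algebra_simps)
lemma kk_sym: "kk a b = kk b a" unfolding kk_def by (auto simp: algebra_simps)

lemma tn_pos: "0 < tn n" and tn_le: "tn n \<le> 1/2" unfolding tn_def by (auto simp: field_simps)

lemma tn_lim: "LIM n sequentially. tn n :> at 0"
proof -
  have "tn \<longlonglongrightarrow> 0" unfolding tn_def by real_asymp
  then show ?thesis unfolding filterlim_at using tn_pos by (auto intro!: always_eventually simp: less_imp_neq[symmetric])
qed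

lemma pw_pos:
  assumes a: "0 < a" and b: "0 < b"
  shows "((\<lambda>n. DD (tn n) a b) \<longlongrightarrow> (b-a)*(ln b - ln a)) sequentially"
proof -
  define g where "g t = xl ((1-t)*a + t*b) + xl ((1-t)*b + t*a)" for t
  have "(g has_real_derivative ((ln a + 1)*(b-a) + (ln b + 1)*(a-b))) (at 0)"
    unfolding g_def xl_def using a b
    by (auto intro!: derivative_eq_intros simp: field_simps)
  then have "((\<lambda>t. (g t - g 0) / (t - 0)) \<longlongrightarrow> ((ln a + 1)*(b-a) + (ln b + 1)*(a-b))) (at 0)"
    using has_field_derivative_iff by blast
  then have "((\<lambda>t. - ((g t - g 0) / (t - 0))) \<longlongrightarrow> - ((ln a + 1)*(b-a) + (ln b + 1)*(a-b))) (at 0)"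
    by (intro tendsto_intros)
  moreover have "- ((g t - g 0) / (t - 0)) = DD t a b" for t
    unfolding g_def DD_def by (cases "t = 0") (simp_all add: field_simps)
  moreover have "- ((ln a + 1)*(b-a) + (ln b + 1)*(a-b)) = (b-a)*(ln b - ln a)"
    by (simp add: algebra_simps)
  ultimately have "((\<lambda>t. DD t a b) \<longlongrightarrow> (b-a)*(ln b - ln a)) (at 0)" by simp
  from filterlim_compose[OF this tn_lim] show ?thesis .
qed

lemma pw_zero:
  assumes b: "0 < b"
  shows "filterlim (\<lambda>n. DD (tn n) 0 b) at_top sequentially"
proof -
  have low: "b * ln (real n + 2) \<le> DD (tn n) 0 b" for n
  proof -
    define t where "t = tn n"
    have t: "0 < t" "t \<le> 1/2" using tn_pos tn_le unfolding t_def by auto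
    have "ln (1 - t) \<le> - t" using t ln_le_minus_one[of "1-t"] by auto
    then have "(1-t) * b * ln (1-t) \<le> (1-t) * b * (- t)"
      using t b by (intro mult_left_mono) auto
    also have "\<dots> \<le> 0" using t b by (simp add: mult_nonneg_nonneg)
    finally have h: "(1-t) * b * ln (1-t) \<le> 0" .
    have l1: "xl (t*b) = t*b*(ln t + ln b)" using t b by (simp add: xl_def ln_mult)
    have l2: "xl ((1-t)*b) = (1-t)*b*(ln (1-t) + ln b)" using t b by (simp add: xl_def ln_mult)
    have "DD t 0 b = (xl b - xl (t*b) - xl ((1-t)*b)) / t" unfolding DD_def by (simp add: xl_def)
    also have "\<dots> = (- t*b* ln t - (1-t) * b * ln (1-t)) / t"
      unfolding l1 l2 by (simp add: xl_def algebra_simps)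
    also have "\<dots> \<ge> (- t*b* ln t) / t" using h t by (intro divide_right_mono) auto
    finally have "- b * ln t \<le> DD t 0 b" using t by simp
    moreover have "ln t = - ln (real n + 2)" unfolding t_def tn_def by (simp add: ln_div)
    ultimately show ?thesis unfolding t_def by simp
  qed
  have "filterlim (\<lambda>n. b * ln (real n + 2)) at_top sequentially"
    using b by real_asymp
  then show ?thesis by (rule filterlim_at_top_mono) (use low in auto)
qed

lemma pw:
  assumes a: "0 \<le> a" and b: "0 \<le> b"
  shows "kk a b \<le> liminf (\<lambda>n. ennreal (DD (tn n) a b))"
proof -
  have top: "liminf (\<lambda>n. ennreal (DD (tn n) a b)) = top" if "a = 0" "0 < b" for a b
  proof -
    have "((\<lambda>n. ennreal (DD (tn n) a b)) \<longlongrightarrow> top) sequentially"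
      using pw_zero[OF that(2)] that(1) by (simp add: ennreal_tendsto_top_eq_at_top)
    then show ?thesis by (intro lim_imp_Liminf) auto
  qed
  show ?thesis
  proof (cases "0 < a \<and> 0 < b")
    case True
    then have "liminf (\<lambda>n. ennreal (DD (tn n) a b)) = ennreal ((b-a)*(ln b - ln a))"
      using pw_pos by (intro lim_imp_Liminf) auto
    then show ?thesis using True by (simp add: kk_def)
  next
    case False
    show ?thesis
    proof (cases "a = b")
      case True with False show ?thesis by (simp add: kk_def)
    next
      case ne: False
      show ?thesis
      proof (cases "a = 0")
        case True then show ?thesis using top[of a b] ne b by simp
      next
        case F: False
        then have "b = 0" "0 < a" using False a b by auto
        then show ?thesis using top[of b a] by (simp add: DD_sym)
      qed
    qed
  qed
qed

lemma measurable_xl[measurable (raw)]: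
  assumes "f \<in> borel_measurable M" shows "(\<lambda>x. xl (f x)) \<in> borel_measurable M"
  unfolding xl_def by (intro borel_measurable_times borel_measurable_ln assms)

lemma t_abs: "0 \<le> (t::real) \<Longrightarrow> t \<le> 1 \<Longrightarrow> t * X \<le> \<bar>X\<bar>"
proof -
  assume t: "0 \<le> t" "t \<le> 1"
  have "t * X \<le> \<bar>t * X\<bar>" by simp
  also have "\<dots> = t * \<bar>X\<bar>" using t by (simp add: abs_mult)
  also have "\<dots> \<le> \<bar>X\<bar>" using t by (simp add: mult_left_le_one_le)
  finally show ?thesis .
qed

lemma mix_int:
  fixes R :: "'b measure"
  assumes "prob_space R" and [measurable]: "r \<in> borel_measurable R" "s \<in> borel_measurable R"
    and nn: "\<And>x. x \<in> space R \<Longrightarrow> 0 \<le> r x \<and> 0 \<le> s x"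
    and ir: "integrable R (\<lambda>x. xl (r x))" and iss: "integrable R (\<lambda>x. xl (s x))"
    and t: "0 \<le> t" "t \<le> 1"
  shows "integrable R (\<lambda>x. xl ((1-t) * r x + t * s x))"
proof -
  interpret prob_space R by fact
  have "integrable R (\<lambda>x. \<bar>xl (r x)\<bar> + \<bar>xl (s x)\<bar> + 1)"
    using ir iss by auto
  then show ?thesis
  proof (rule Bochner_Integration.integrable_bound)
    show "AE x in R. norm (xl ((1-t) * r x + t * s x)) \<le> norm (\<bar>xl (r x)\<bar> + \<bar>xl (s x)\<bar> + 1)"
    proof (rule AE_I2)
      fix x assume x: "x \<in> space R"
      have m: "0 \<le> (1-t) * r x + t * s x" using nn[OF x] t by auto
      have u: "xl ((1-t) * r x + t * s x) \<le> (1-t) * xl (r x) + t * xl (s x)"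
        using xl_convex nn[OF x] t by auto
      have "(1-t) * xl (r x) \<le> \<bar>xl (r x)\<bar>" "t * xl (s x) \<le> \<bar>xl (s x)\<bar>"
        using t by (auto intro!: t_abs)
      moreover have "-1 \<le> xl ((1-t) * r x + t * s x)" using xl_ge[OF m] m by linarith
      ultimately show "norm (xl ((1-t) * r x + t * s x)) \<le> norm (\<bar>xl (r x)\<bar> + \<bar>xl (s x)\<bar> + 1)"
        using u by auto
    qed
  qed measurable
qed

lemma core:
  fixes R :: "'b measure" and r s :: "'b \<Rightarrow> real" and A B :: real
  assumes "prob_space R" and [measurable]: "r \<in> borel_measurable R" "s \<in> borel_measurable R"
    and nn: "\<And>x. x \<in> space R \<Longrightarrow> 0 \<le> r x \<and> 0 \<le> s x"
    and ir: "integrable R (\<lambda>x. xl (r x))" and iss: "integrable R (\<lambda>x. xl (s x))"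
    and hA: "\<And>t. 0 < t \<Longrightarrow> t \<le> 1 \<Longrightarrow> (\<integral>x. xl (r x) \<partial>R) - t * A \<le> (\<integral>x. xl ((1-t) * r x + t * s x) \<partial>R)"
    and hB: "\<And>t. 0 < t \<Longrightarrow> t \<le> 1 \<Longrightarrow> (\<integral>x. xl (s x) \<partial>R) + t * B \<le> (\<integral>x. xl ((1-t) * s x + t * r x) \<partial>R)"
  shows "(\<integral>\<^sup>+x. kk (r x) (s x) \<partial>R) \<le> ennreal (A - B) \<and> 0 \<le> A - B"
proof -
  interpret prob_space R by fact
  have nn': "\<And>x. x \<in> space R \<Longrightarrow> 0 \<le> s x \<and> 0 \<le> r x" using nn by auto
  have bound: "(\<integral>\<^sup>+x. ennreal (DD (tn n) (r x) (s x)) \<partial>R) \<le> ennreal (A - B) \<and> 0 \<le> A - B" for n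
  proof -
    define t where "t = tn n"
    have t: "0 < t" "t \<le> 1" using tn_pos[of n] tn_le[of n] unfolding t_def by auto
    have i1: "integrable R (\<lambda>x. xl ((1-t) * r x + t * s x))"
      using mix_int[OF assms(1-5) iss] t by auto
    have i2: "integrable R (\<lambda>x. xl ((1-t) * s x + t * r x))"
      using mix_int[OF assms(1) assms(3,2) nn' iss ir] t by auto
    have eq: "(\<lambda>x. DD t (r x) (s x)) = (\<lambda>x. (xl (r x) + xl (s x) - xl ((1-t) * r x + t * s x) - xl ((1-t) * s x + t * r x)) / t)"
      unfolding DD_def by simp
    have int: "integrable R (\<lambda>x. DD t (r x) (s x))"
      unfolding eq using ir iss i1 i2 by auto
    have nnD: "0 \<le> DD t (r x) (s x)" if x: "x \<in> space R" for x
    proof -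
      have "xl ((1-t) * r x + t * s x) \<le> (1-t) * xl (r x) + t * xl (s x)"
        using xl_convex nn[OF x] t by auto
      moreover have "xl ((1-t) * s x + t * r x) \<le> (1-t) * xl (s x) + t * xl (r x)"
        using xl_convex nn[OF x] t by auto
      ultimately show ?thesis unfolding DD_def using t by (auto simp: algebra_simps)
    qed
    have "(\<integral>x. DD t (r x) (s x) \<partial>R) = ((\<integral>x. xl (r x) \<partial>R) + (\<integral>x. xl (s x) \<partial>R)
        - (\<integral>x. xl ((1-t) * r x + t * s x) \<partial>R) - (\<integral>x. xl ((1-t) * s x + t * r x) \<partial>R)) / t"
      unfolding eq using ir iss i1 i2 by simp
    also have "\<dots> \<le> (t * A - t * B) / t"
      using hA[OF t] hB[OF t] t by (intro divide_right_mono) auto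
    also have "\<dots> = A - B" using t by (simp add: field_simps)
    finally have le: "(\<integral>x. DD t (r x) (s x) \<partial>R) \<le> A - B" .
    have "(\<integral>\<^sup>+x. ennreal (DD t (r x) (s x)) \<partial>R) = ennreal (\<integral>x. DD t (r x) (s x) \<partial>R)"
      using int nnD by (intro nn_integral_eq_integral) (auto intro!: AE_I2)
    moreover have "0 \<le> (\<integral>x. DD t (r x) (s x) \<partial>R)" using nnD by (intro integral_nonneg_AE AE_I2) auto
    ultimately show ?thesis unfolding t_def[symmetric] using le by (simp add: ennreal_leI)
  qed
  have "(\<integral>\<^sup>+x. kk (r x) (s x) \<partial>R) \<le> (\<integral>\<^sup>+x. liminf (\<lambda>n. ennreal (DD (tn n) (r x) (s x))) \<partial>R)"
    using nn by (intro nn_integral_mono) (auto intro!: pw)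
  also have "\<dots> \<le> liminf (\<lambda>n. \<integral>\<^sup>+x. ennreal (DD (tn n) (r x) (s x)) \<partial>R)"
    by (intro nn_integral_liminf) (simp add: DD_def)
  also have "\<dots> \<le> liminf (\<lambda>n. ennreal (A - B))"
    using bound by (intro Liminf_mono) auto
  also have "\<dots> = ennreal (A - B)" by (simp add: Liminf_const)
  finally show ?thesis using bound[of 0] by simp
qed

lemma xl_neg_le: "0 \<le> x \<Longrightarrow> - xl x \<le> 1"
  using xl_ge[of x] by linarith

lemma KL_density:
  fixes R :: "'b measure" and \<rho> :: "'b \<Rightarrow> real"
  assumes "prob_space R" and [measurable]: "\<rho> \<in> borel_measurable R"
    and nn: "\<And>x. x \<in> space R \<Longrightarrow> 0 \<le> \<rho> x"
    and int: "integrable R (\<lambda>x. xl (\<rho> x))"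
  shows "KL_div (density R \<rho>) R = ereal (\<integral>x. xl (\<rho> x) \<partial>R)"
proof -
  interpret prob_space R by fact
  have ac: "absolutely_continuous R (density R \<rho>)"
    by (rule absolutely_continuousI_density) measurable
  have ae: "AE x in R. enn2real (RN_deriv R (density R \<rho>) x) = \<rho> x"
  proof -
    have "AE x in R. ennreal (\<rho> x) = RN_deriv R (density R \<rho>) x"
      by (rule RN_deriv_unique) auto
    then show ?thesis using AE_space by eventually_elim (metis enn2real_ennreal nn)
  qed
  let ?f = "\<lambda>x. enn2real (RN_deriv R (density R \<rho>) x)"
  have P: "(\<integral>\<^sup>+x. ennreal (?f x * ln (?f x)) \<partial>R) = (\<integral>\<^sup>+x. ennreal (xl (\<rho> x)) \<partial>R)"
    apply (rule nn_integral_cong_AE) using ae by eventually_elim (simp add: xl_def)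
  have N: "(\<integral>\<^sup>+x. ennreal (- (?f x * ln (?f x))) \<partial>R) = (\<integral>\<^sup>+x. ennreal (- xl (\<rho> x)) \<partial>R)"
    apply (rule nn_integral_cong_AE) using ae by eventually_elim (simp add: xl_def)
  have Pf: "(\<integral>\<^sup>+x. ennreal (xl (\<rho> x)) \<partial>R) \<noteq> \<infinity>" and Nf: "(\<integral>\<^sup>+x. ennreal (- xl (\<rho> x)) \<partial>R) \<noteq> \<infinity>"
    using int unfolding real_integrable_def by auto
  have "KL_div (density R \<rho>) R = enn2ereal (\<integral>\<^sup>+x. ennreal (xl (\<rho> x)) \<partial>R) - enn2ereal (\<integral>\<^sup>+x. ennreal (- xl (\<rho> x)) \<partial>R)"
    unfolding KL_div_def Let_def using ac P N by simp
  also have "\<dots> = ereal (enn2real (\<integral>\<^sup>+x. ennreal (xl (\<rho> x)) \<partial>R)) - ereal (enn2real (\<integral>\<^sup>+x. ennreal (- xl (\<rho> x)) \<partial>R))"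
    using Pf Nf by (simp add: ennreal_enn2real_if less_top[symmetric] flip: enn2ereal_ennreal)
  also have "\<dots> = ereal (\<integral>x. xl (\<rho> x) \<partial>R)"
    using real_lebesgue_integral_def[OF int] by simp
  finally show ?thesis .
qed

lemma KL_fin:
  fixes R :: "'b measure"
  assumes "prob_space R" "prob_space P" and sets: "sets P = sets R"
    and fin: "KL_div P R \<noteq> \<infinity>"
  defines "\<rho> \<equiv> \<lambda>x. enn2real (RN_deriv R P x)"
  shows "P = density R \<rho>" and "integrable R (\<lambda>x. xl (\<rho> x))"
proof -
  interpret prob_space R by fact
  interpret P: prob_space P by fact
  have ac: "absolutely_continuous R P"
    using fin unfolding KL_div_def by (auto split: if_splits)
  have "density R (RN_deriv R P) = P" using density_RN_deriv[OF ac sets] .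
  moreover have "density R (RN_deriv R P) = density R \<rho>"
  proof (rule density_cong)
    show "AE x in R. RN_deriv R P x = ennreal (\<rho> x)"
      using RN_deriv_finite[OF _ ac sets] P.sigma_finite_measure_axioms
      unfolding \<rho>_def by (auto elim!: AE_mp intro!: AE_I2 simp: less_top ennreal_enn2real_if)
  qed (auto simp: \<rho>_def)
  ultimately show "P = density R \<rho>" by simp
  have Nle: "(\<integral>\<^sup>+x. ennreal (- xl (\<rho> x)) \<partial>R) \<le> (\<integral>\<^sup>+x. 1 \<partial>R)"
    apply (intro nn_integral_mono)
    using xl_neg_le[OF enn2real_nonneg] by (auto simp: \<rho>_def ennreal_le_1)
  then have Nf: "(\<integral>\<^sup>+x. ennreal (- xl (\<rho> x)) \<partial>R) \<noteq> \<infinity>"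
    using emeasure_space_1 by (auto simp: top_unique)
  have "KL_div P R = enn2ereal (\<integral>\<^sup>+x. ennreal (xl (\<rho> x)) \<partial>R) - enn2ereal (\<integral>\<^sup>+x. ennreal (- xl (\<rho> x)) \<partial>R)"
    unfolding KL_div_def Let_def using ac sets by (simp add: \<rho>_def xl_def)
  then have Pf: "(\<integral>\<^sup>+x. ennreal (xl (\<rho> x)) \<partial>R) \<noteq> \<infinity>"
    using fin Nf by (auto simp: ennreal_enn2real_if less_top[symmetric])
  show "integrable R (\<lambda>x. xl (\<rho> x))"
    unfolding real_integrable_def using Pf Nf by (auto simp: \<rho>_def)
qed

lemma cost_density:
  fixes R :: "'b measure" and \<rho> c :: "'b \<Rightarrow> real"
  assumes [measurable]: "\<rho> \<in> borel_measurable R" "c \<in> borel_measurable R"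
    and nn: "\<And>x. x \<in> space R \<Longrightarrow> 0 \<le> \<rho> x" and cnn: "\<And>x. x \<in> space R \<Longrightarrow> 0 \<le> c x"
    and int: "integrable R (\<lambda>x. \<rho> x * c x)"
  shows "enn2ereal (\<integral>\<^sup>+x. ennreal (c x) \<partial>density R \<rho>) = ereal (\<integral>x. \<rho> x * c x \<partial>R)"
proof -
  have "(\<integral>\<^sup>+x. ennreal (c x) \<partial>density R \<rho>) = (\<integral>\<^sup>+x. ennreal (\<rho> x) * ennreal (c x) \<partial>R)"
    by (subst nn_integral_density) auto
  also have "\<dots> = (\<integral>\<^sup>+x. ennreal (\<rho> x * c x) \<partial>R)"
    using nn cnn by (intro nn_integral_cong) (auto simp: ennreal_mult)
  also have "\<dots> = ennreal (\<integral>x. \<rho> x * c x \<partial>R)"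
    using nn cnn int by (intro nn_integral_eq_integral) (auto intro!: AE_I2)
  finally show ?thesis using nn cnn
    by (simp add: integral_nonneg_AE AE_I2)
qed

definition qq :: "real \<Rightarrow> real \<Rightarrow> real" where "qq a b = (if 0 < b then a / b else 0)"

lemma measurable_kk[measurable (raw)]:
  assumes "r \<in> borel_measurable M" "s \<in> borel_measurable M"
  shows "(\<lambda>x. kk (r x) (s x)) \<in> borel_measurable M"
  unfolding kk_def using assms by measurable

lemma measurable_qq[measurable (raw)]:
  assumes "r \<in> borel_measurable M" "s \<in> borel_measurable M"
  shows "(\<lambda>x. qq (r x) (s x)) \<in> borel_measurable M"
  unfolding qq_def using assms by measurable

lemma KL_one:
  fixes R :: "'b measure" and r s :: "'b \<Rightarrow> real"
  assumes "prob_space R" and [measurable]: "r \<in> borel_measurable R" "s \<in> borel_measurable R"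
    and nn: "\<And>x. x \<in> space R \<Longrightarrow> 0 \<le> r x \<and> 0 \<le> s x"
    and ps: "prob_space (density R s)"
    and z: "AE x in R. r x = 0 \<longleftrightarrow> s x = 0"
    and int: "integrable R (\<lambda>x. s x * xl (qq (r x) (s x)))"
  shows "KL_div (density R r) (density R s) = ereal (\<integral>x. s x * xl (qq (r x) (s x)) \<partial>R)"
proof -
  let ?S = "density R s"
  have eq: "density ?S (\<lambda>x. qq (r x) (s x)) = density R r"
  proof -
    have "density ?S (\<lambda>x. ennreal (qq (r x) (s x))) = density R (\<lambda>x. ennreal (s x) * ennreal (qq (r x) (s x)))"
      by (rule density_density_eq) auto
    also have "\<dots> = density R r"
    proof (rule density_cong)
      show "AE x in R. ennreal (s x) * ennreal (qq (r x) (s x)) = ennreal (r x)"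
        using z AE_space
      proof eventually_elim
        case (elim x)
        then show ?case using nn[of x]
          by (cases "0 < s x") (auto simp: qq_def ennreal_mult[symmetric])
      qed
    qed auto
    finally show ?thesis .
  qed
  have sp: "space ?S = space R" by simp
  have nnq: "\<And>x. x \<in> space ?S \<Longrightarrow> 0 \<le> qq (r x) (s x)"
    using nn by (auto simp: qq_def)
  have intS: "integrable ?S (\<lambda>x. xl (qq (r x) (s x)))"
    using int nn by (subst integrable_density) (auto intro!: AE_I2)
  have "KL_div (density ?S (\<lambda>x. qq (r x) (s x))) ?S = ereal (\<integral>x. xl (qq (r x) (s x)) \<partial>?S)"
    by (rule KL_density[OF ps _ nnq intS]) auto
  also have "(\<integral>x. xl (qq (r x) (s x)) \<partial>?S) = (\<integral>x. s x * xl (qq (r x) (s x)) \<partial>R)"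
    using nn by (subst integral_density) (auto intro!: AE_I2)
  finally show ?thesis unfolding eq .
qed

lemma vv_lower: "0 \<le> a \<Longrightarrow> 0 \<le> b \<Longrightarrow> - b \<le> b * xl (qq a b)"
proof (cases "0 < b")
  case True
  assume a: "0 \<le> a"
  have "a / b - 1 \<le> xl (a / b)" using xl_ge a True by auto
  then have "b * (a / b - 1) \<le> b * xl (a / b)" using True by (intro mult_left_mono) auto
  then have "a - b \<le> b * xl (a / b)" using True by (simp add: right_diff_distrib)
  then show ?thesis using True a by (simp add: qq_def)
qed (simp add: qq_def)

lemma vv_sum:
  assumes a: "0 < a" and b: "0 < b"
  shows "b * xl (qq a b) + a * xl (qq b a) = enn2real (kk a b)"
proof -
  have nn: "0 \<le> (b-a)*(ln b - ln a)"
  proof (cases "a \<le> b")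
    case True then have "ln a \<le> ln b" using a b by simp
    then show ?thesis using True by (simp add: mult_nonneg_nonneg)
  next
    case False then have "ln b \<le> ln a" using a b by simp
    then show ?thesis using False by (simp add: mult_nonpos_nonpos)
  qed
  have "b * xl (qq a b) + a * xl (qq b a) = a * (ln a - ln b) + b * (ln b - ln a)"
    using a b by (simp add: qq_def xl_def ln_div)
  also have "\<dots> = (b-a)*(ln b - ln a)" by (simp add: algebra_simps)
  finally show ?thesis using a b nn by (simp add: kk_def)
qed

lemma KL_pair:
  fixes R :: "'b measure" and r s :: "'b \<Rightarrow> real"
  assumes "prob_space R" and [measurable]: "r \<in> borel_measurable R" "s \<in> borel_measurable R"
    and nn: "\<And>x. x \<in> space R \<Longrightarrow> 0 \<le> r x \<and> 0 \<le> s x"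
    and pr: "prob_space (density R r)" and ps: "prob_space (density R s)"
    and bnd: "(\<integral>\<^sup>+x. kk (r x) (s x) \<partial>R) \<le> ennreal G" and G: "0 \<le> G"
  shows "KL_div (density R r) (density R s) + KL_div (density R s) (density R r) \<le> ereal G"
proof -
  interpret prob_space R by fact
  have nn': "\<And>x. x \<in> space R \<Longrightarrow> 0 \<le> s x \<and> 0 \<le> r x" using nn by auto
  have fin: "(\<integral>\<^sup>+x. kk (r x) (s x) \<partial>R) \<noteq> \<infinity>" using bnd by (auto simp: top_unique)
  have aefin: "AE x in R. kk (r x) (s x) \<noteq> \<infinity>"
    by (rule nn_integral_PInf_AE[OF _ fin]) measurable
  have cases: "AE x in R. (0 < r x \<and> 0 < s x) \<or> (r x = 0 \<and> s x = 0)"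
    using aefin AE_space
  proof eventually_elim
    case (elim x) then show ?case using nn[of x] by (auto simp: kk_def split: if_splits)
  qed
  have z: "AE x in R. r x = 0 \<longleftrightarrow> s x = 0" using cases by eventually_elim auto
  have z': "AE x in R. s x = 0 \<longleftrightarrow> r x = 0" using cases by eventually_elim auto
  have dens_int: "integrable R f" if [measurable]: "f \<in> borel_measurable R" and fnn: "\<And>x. x \<in> space R \<Longrightarrow> 0 \<le> f x"
     and pf: "prob_space (density R f)" for f
  proof (rule integrableI_nonneg)
    have "(\<integral>\<^sup>+x. ennreal (f x) \<partial>R) = emeasure (density R f) (space R)"
      by (subst emeasure_density) (auto intro!: nn_integral_cong)
    also have "\<dots> = 1" using prob_space.emeasure_space_1[OF pf] by simp
    finally show "(\<integral>\<^sup>+x. ennreal (f x) \<partial>R) < \<infinity>" by simp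
  qed (use fnn in \<open>auto intro!: AE_I2\<close>)
  have ir: "integrable R r" using dens_int[of r] nn pr by auto
  have is': "integrable R s" using dens_int[of s] nn ps by auto
  let ?k = "\<lambda>x. enn2real (kk (r x) (s x))"
  have ik: "integrable R ?k"
  proof (rule integrableI_nonneg)
    have "(\<integral>\<^sup>+x. ennreal (?k x) \<partial>R) \<le> (\<integral>\<^sup>+x. kk (r x) (s x) \<partial>R)"
      by (intro nn_integral_mono) (simp add: ennreal_enn2real_if)
    then show "(\<integral>\<^sup>+x. ennreal (?k x) \<partial>R) < \<infinity>" using fin by (simp add: less_top order_le_less_trans)
  qed auto
  let ?v1 = "\<lambda>x. s x * xl (qq (r x) (s x))" and ?v2 = "\<lambda>x. r x * xl (qq (s x) (r x))"
  have sum: "AE x in R. ?v1 x + ?v2 x = ?k x"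
    using cases
  proof eventually_elim
    case (elim x)
    then show ?case
    proof
      assume "0 < r x \<and> 0 < s x" then show ?thesis using vv_sum[of "r x" "s x"] by simp
    qed (auto simp: qq_def kk_def)
  qed
  have low1: "\<And>x. x \<in> space R \<Longrightarrow> - s x \<le> ?v1 x" using nn vv_lower by auto
  have low2: "\<And>x. x \<in> space R \<Longrightarrow> - r x \<le> ?v2 x" using nn vv_lower by auto
  have bnd_int: "integrable R (\<lambda>x. ?k x + r x + s x)" using ik ir is' by auto
  have i1: "integrable R ?v1"
    using bnd_int
  proof (rule Bochner_Integration.integrable_bound)
    show "AE x in R. norm (?v1 x) \<le> norm (?k x + r x + s x)"
      using sum AE_space
    proof eventually_elim
      case (elim x) then show ?case using low1[of x] low2[of x] nn[of x] enn2real_nonneg[of "kk (r x) (s x)"] unfolding abs_le_iff real_norm_def by linarith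
    qed
  qed measurable
  have i2: "integrable R ?v2"
    using bnd_int
  proof (rule Bochner_Integration.integrable_bound)
    show "AE x in R. norm (?v2 x) \<le> norm (?k x + r x + s x)"
      using sum AE_space
    proof eventually_elim
      case (elim x) then show ?case using low1[of x] low2[of x] nn[of x] enn2real_nonneg[of "kk (r x) (s x)"] unfolding abs_le_iff real_norm_def by linarith
    qed
  qed measurable
  have K1: "KL_div (density R r) (density R s) = ereal (\<integral>x. ?v1 x \<partial>R)"
    by (rule KL_one[OF assms(1-4) ps z i1])
  have K2: "KL_div (density R s) (density R r) = ereal (\<integral>x. ?v2 x \<partial>R)"
    by (rule KL_one[OF assms(1) assms(3,2) nn' pr z' i2])
  have "(\<integral>x. ?v1 x \<partial>R) + (\<integral>x. ?v2 x \<partial>R) = (\<integral>x. ?k x \<partial>R)"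
  proof -
    have "(\<integral>x. ?v1 x \<partial>R) + (\<integral>x. ?v2 x \<partial>R) = (\<integral>x. ?v1 x + ?v2 x \<partial>R)"
      using i1 i2 by simp
    also have "\<dots> = (\<integral>x. ?k x \<partial>R)" using sum by (intro integral_cong_AE) auto
    finally show ?thesis .
  qed
  moreover have "ennreal (\<integral>x. ?k x \<partial>R) \<le> ennreal G"
  proof -
    have "ennreal (\<integral>x. ?k x \<partial>R) = (\<integral>\<^sup>+x. ennreal (?k x) \<partial>R)"
      using ik by (intro nn_integral_eq_integral[symmetric]) auto
    also have "\<dots> \<le> (\<integral>\<^sup>+x. kk (r x) (s x) \<partial>R)"
      by (intro nn_integral_mono) (simp add: ennreal_enn2real_if)
    finally show ?thesis using bnd by simp
  qed
  then have "(\<integral>x. ?k x \<partial>R) \<le> G" using G by simp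
  ultimately show ?thesis unfolding K1 K2 by simp
qed

lemma space_metric_borel: "Metric_space S d \<Longrightarrow> space (metric_borel S d) = S"
  unfolding metric_borel_def borel_of_def by (simp add: space_measure_of_conv Metric_space.topspace_mtopology)

lemma meas_dist:
  assumes ms: "Metric_space S d" and a: "a \<in> S"
  shows "(\<lambda>y. d y a) \<in> borel_measurable (metric_borel S d)"
proof (rule borel_measurableI)
  interpret Metric_space S d by fact
  fix U :: "real set" assume U: "open U"
  have op: "openin mtopology {y\<in>S. d y a \<in> U}"
    unfolding openin_mtopology
  proof safe
    fix y assume y: "y \<in> S" "d y a \<in> U"
    obtain e where e: "e > 0" "ball (d y a) e \<subseteq> U" using U y openE by blast
    show "\<exists>r>0. mball y r \<subseteq> {y \<in> S. d y a \<in> U}"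
    proof (intro exI conjI)
      show "mball y e \<subseteq> {y \<in> S. d y a \<in> U}"
      proof
        fix z assume z: "z \<in> mball y e"
        then have zS: "z \<in> S" and dz: "d y z < e" by auto
        have "\<bar>d z a - d y a\<bar> \<le> d y z"
          using triangle[OF y(1) zS a] triangle[OF zS y(1) a] commute[of y z] by auto
        then have "d z a \<in> ball (d y a) e" using dz by (auto simp: dist_real_def)
        then show "z \<in> {y \<in> S. d y a \<in> U}" using e zS by auto
      qed
    qed (use e in auto)
  qed
  have eq: "(\<lambda>y. d y a) -` U \<inter> space (metric_borel S d) = {y\<in>S. d y a \<in> U}"
    using space_metric_borel[OF ms] by auto
  have sub: "{U. openin mtopology U} \<subseteq> Pow S" using openin_subset by fastforce
  have "{y\<in>S. d y a \<in> U} \<in> sets (metric_borel S d)"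
    unfolding metric_borel_def borel_of_def topspace_mtopology
    using op sub by (simp add: sets_measure_of sigma_sets.Basic)
  then show "(\<lambda>y. d y a) -` U \<inter> space (metric_borel S d) \<in> sets (metric_borel S d)"
    unfolding eq .
qed

lemma powr_sum_bound:
  fixes a b q :: real assumes "0 \<le> a" "0 \<le> b" "0 \<le> q"
  shows "(a + b) powr q \<le> 2 powr q * (a powr q + b powr q)"
proof -
  have "(a + b) powr q \<le> (2 * max a b) powr q"
    using assms by (intro powr_mono2) auto
  also have "\<dots> = 2 powr q * (max a b) powr q" using assms by (simp add: powr_mult)
  also have "(max a b) powr q \<le> a powr q + b powr q"
    by (cases "a \<le> b") (auto simp: max_def)
  then have "2 powr q * (max a b) powr q \<le> 2 powr q * (a powr q + b powr q)"
    by (intro mult_left_mono) auto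
  finally show ?thesis .
qed

lemma moment_int:
  assumes ms: "Metric_space S d" and mu: "P_p p S d \<mu>" and pinf: "p \<noteq> \<infinity>" and p1: "1 \<le> p"
    and xh: "xh \<in> S"
  shows "integrable \<mu> (\<lambda>y. d y xh powr real_of_ereal p)"
proof -
  interpret Metric_space S d by fact
  define q where "q = real_of_ereal p"
  have q: "0 \<le> q" unfolding q_def using p1 pinf by (cases p) auto
  have sets: "sets \<mu> = sets (metric_borel S d)" and ps: "prob_space \<mu>" using mu by (auto simp: P_p_def)
  interpret prob_space \<mu> by fact
  have sp: "space \<mu> = S" using sets_eq_imp_space_eq[OF sets] space_metric_borel[OF ms] by simp
  obtain x0 where x0: "x0 \<in> S" and fin: "(\<integral>\<^sup>+ x. ennreal (d x x0 powr q) \<partial>\<mu>) < \<infinity>"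
    using mu pinf unfolding P_p_def q_def by auto
  have md: "(\<lambda>y. d y a) \<in> borel_measurable \<mu>" if "a \<in> S" for a
    unfolding measurable_cong_sets[OF sets refl] by (rule meas_dist[OF ms that])
  have m1: "(\<lambda>y. d y xh powr q) \<in> borel_measurable \<mu>" using md[OF xh] by measurable
  have m2: "(\<lambda>y. d y x0 powr q) \<in> borel_measurable \<mu>" using md[OF x0] by measurable
  show ?thesis unfolding q_def[symmetric]
  proof (rule integrableI_nonneg)
    have "(\<integral>\<^sup>+ y. ennreal (d y xh powr q) \<partial>\<mu>) \<le> (\<integral>\<^sup>+ y. ennreal (2 powr q) * (ennreal (d y x0 powr q) + ennreal (d x0 xh powr q)) \<partial>\<mu>)"
    proof (intro nn_integral_mono)
      fix y assume "y \<in> space \<mu>"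
      then have y: "y \<in> S" using sp by simp
      have "d y xh powr q \<le> (d y x0 + d x0 xh) powr q"
        using triangle[OF y x0 xh] q by (intro powr_mono2) auto
      also have "\<dots> \<le> 2 powr q * (d y x0 powr q + d x0 xh powr q)"
        using q y x0 xh by (intro powr_sum_bound) auto
      finally show "ennreal (d y xh powr q) \<le> ennreal (2 powr q) * (ennreal (d y x0 powr q) + ennreal (d x0 xh powr q))"
        by (simp add: ennreal_mult[symmetric] ennreal_plus[symmetric] ennreal_leI del: ennreal_plus)
    qed
    also have "\<dots> = ennreal (2 powr q) * ((\<integral>\<^sup>+ y. ennreal (d y x0 powr q) \<partial>\<mu>) + ennreal (d x0 xh powr q))"
      using m2 by (simp add: nn_integral_cmult nn_integral_add emeasure_space_1)
    also have "\<dots> < \<infinity>" using fin by (simp add: ennreal_mult_less_top)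
    finally show "(\<integral>\<^sup>+ y. ennreal (d y xh powr q) \<partial>\<mu>) < \<infinity>" .
  qed (use m1 in auto)
qed

lemma space_PiM_S:
  assumes polish: "\<And>i. i < N \<Longrightarrow> polish_metric (S i) (d i)"
    and mu: "\<And>i. i < N \<Longrightarrow> P_p p (S i) (d i) (\<mu> i)"
  shows "space (\<Pi>\<^sub>M i\<in>{..<N}. \<mu> i) = (\<Pi>\<^sub>E i\<in>{..<N}. S i)"
proof -
  have "space (\<mu> i) = S i" if "i < N" for i
    using sets_eq_imp_space_eq[of "\<mu> i" "metric_borel (S i) (d i)"] mu[OF that] polish[OF that]
      space_metric_borel[of "S i" "d i"] by (auto simp: P_p_def polish_metric_def)
  then show ?thesis unfolding space_PiM by (intro PiE_cong) auto
qed

lemma coupling_int: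
  assumes polish: "\<And>i. i < N \<Longrightarrow> polish_metric (S i) (d i)"
    and p: "1 \<le> p"
    and mu: "\<And>i. i < N \<Longrightarrow> P_p p (S i) (d i) (\<mu> i)"
    and c_meas: "c \<in> borel_measurable (\<Pi>\<^sub>M i\<in>{..<N}. \<mu> i)"
    and growth: "growth_p p N S d c"
    and pi: "\<pi> \<in> couplings N \<mu>"
  shows "integrable \<pi> c"
proof -
  have ps: "prob_space \<pi>" and sets: "sets \<pi> = sets (\<Pi>\<^sub>M i\<in>{..<N}. \<mu> i)"
    and marg: "\<And>i. i < N \<Longrightarrow> distr \<pi> (\<mu> i) (\<lambda>x. x i) = \<mu> i"
    using pi by (auto simp: couplings_def)
  interpret prob_space \<pi> by fact
  have sp: "space \<pi> = (\<Pi>\<^sub>E i\<in>{..<N}. S i)"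
    using sets_eq_imp_space_eq[OF sets] space_PiM_S[OF polish mu] by simp
  have cm: "c \<in> borel_measurable \<pi>"
    unfolding measurable_cong_sets[OF sets refl] by (rule c_meas)
  show ?thesis
  proof (cases "p = \<infinity>")
    case True
    then obtain C where C: "\<And>x. x \<in> (\<Pi>\<^sub>E i\<in>{..<N}. S i) \<Longrightarrow> \<bar>c x\<bar> \<le> C"
      using growth unfolding growth_p_def by auto
    show ?thesis
      by (rule integrable_const_bound[where B=C]) (use C sp cm in \<open>auto intro!: AE_I2\<close>)
  next
    case False
    define q where "q = real_of_ereal p"
    obtain C xh where xh: "xh \<in> (\<Pi>\<^sub>E i\<in>{..<N}. S i)"
      and C: "\<And>x. x \<in> (\<Pi>\<^sub>E i\<in>{..<N}. S i) \<Longrightarrow> \<bar>c x\<bar> \<le> C * (1 + dXp_pow N d q x xh)"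
      using growth False unfolding growth_p_def q_def by (simp only: if_False) blast
    have comp: "integrable \<pi> (\<lambda>x. d i (x i) (xh i) powr q)" if i: "i < N" for i
    proof -
      have ms: "Metric_space (S i) (d i)" using polish[OF i] by (simp add: polish_metric_def)
      have mi: "integrable (\<mu> i) (\<lambda>y. d i y (xh i) powr q)"
        unfolding q_def using moment_int[OF ms mu[OF i] False p] xh i by auto
      have meas: "(\<lambda>x. x i) \<in> measurable \<pi> (\<mu> i)"
        unfolding measurable_cong_sets[OF sets refl] using i by (intro measurable_component_singleton) auto
      have "integrable (distr \<pi> (\<mu> i) (\<lambda>x. x i)) (\<lambda>y. d i y (xh i) powr q)"
        using mi marg[OF i] by simp
      then show ?thesis
        using integrable_distr_eq[OF meas borel_measurable_integrable[OF mi]] by simp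
    qed
    have "integrable \<pi> (\<lambda>x. C * (1 + dXp_pow N d q x xh))"
      unfolding dXp_pow_def using comp by (intro integrable_mult_right Bochner_Integration.integrable_add integrable_sum) auto
    then show ?thesis
    proof (rule Bochner_Integration.integrable_bound)
      show "AE x in \<pi>. norm (c x) \<le> norm (C * (1 + dXp_pow N d q x xh))"
        using C sp by (auto intro!: AE_I2 order_trans[OF _ abs_ge_self])
    qed (rule cm)
  qed
qed

lemma mix_emeasure:
  fixes r s :: "'b \<Rightarrow> real" and t :: real
  assumes [measurable]: "r \<in> borel_measurable R" "s \<in> borel_measurable R"
    and nn: "\<And>x. x \<in> space R \<Longrightarrow> 0 \<le> r x \<and> 0 \<le> s x" and t: "0 \<le> t" "t \<le> 1"
    and A: "A \<in> sets R"
  shows "emeasure (density R (\<lambda>x. (1-t) * r x + t * s x)) A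
      = ennreal (1-t) * emeasure (density R r) A + ennreal t * emeasure (density R s) A"
proof -
  have "emeasure (density R (\<lambda>x. (1-t) * r x + t * s x)) A
      = (\<integral>\<^sup>+x. ennreal ((1-t) * r x + t * s x) * indicator A x \<partial>R)"
    using A by (simp add: emeasure_density)
  also have "\<dots> = (\<integral>\<^sup>+x. ennreal (1-t) * (ennreal (r x) * indicator A x) + ennreal t * (ennreal (s x) * indicator A x) \<partial>R)"
  proof (intro nn_integral_cong)
    fix x assume x: "x \<in> space R"
    have e: "ennreal ((1-t) * r x + t * s x) = ennreal (1-t) * ennreal (r x) + ennreal t * ennreal (s x)"
      using nn[OF x] t by (simp add: ennreal_plus ennreal_mult)
    show "ennreal ((1-t) * r x + t * s x) * indicator A x = ennreal (1-t) * (ennreal (r x) * indicator A x) + ennreal t * (ennreal (s x) * indicator A x)"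
      unfolding e by (simp add: distrib_right mult.assoc)
  qed
  also have "\<dots> = ennreal (1-t) * (\<integral>\<^sup>+x. ennreal (r x) * indicator A x \<partial>R) + ennreal t * (\<integral>\<^sup>+x. ennreal (s x) * indicator A x \<partial>R)"
    using A by (simp add: nn_integral_add nn_integral_cmult)
  finally show ?thesis using A by (simp add: emeasure_density)
qed

lemma mix_coupling:
  fixes r s :: "(nat \<Rightarrow> 'a) \<Rightarrow> real" and t :: real
  assumes [measurable]: "r \<in> borel_measurable (\<Pi>\<^sub>M i\<in>{..<N}. \<mu> i)" "s \<in> borel_measurable (\<Pi>\<^sub>M i\<in>{..<N}. \<mu> i)"
    and nn: "\<And>x. x \<in> space (\<Pi>\<^sub>M i\<in>{..<N}. \<mu> i) \<Longrightarrow> 0 \<le> r x \<and> 0 \<le> s x" and t: "0 \<le> t" "t \<le> 1"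
    and cr: "density (\<Pi>\<^sub>M i\<in>{..<N}. \<mu> i) r \<in> couplings N \<mu>"
    and cs: "density (\<Pi>\<^sub>M i\<in>{..<N}. \<mu> i) s \<in> couplings N \<mu>"
  shows "density (\<Pi>\<^sub>M i\<in>{..<N}. \<mu> i) (\<lambda>x. (1-t) * r x + t * s x) \<in> couplings N \<mu>"
proof -
  let ?R = "\<Pi>\<^sub>M i\<in>{..<N}. \<mu> i"
  let ?M = "density ?R (\<lambda>x. (1-t) * r x + t * s x)"
  have one: "ennreal (1-t) + ennreal t = 1" using t by (simp flip: ennreal_plus)
  have me: "\<And>A. A \<in> sets ?R \<Longrightarrow> emeasure ?M A
      = ennreal (1-t) * emeasure (density ?R r) A + ennreal t * emeasure (density ?R s) A"
    by (rule mix_emeasure) (use nn t in auto)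
  have "prob_space ?M"
  proof
    have e1: "emeasure (density ?R r) (space ?R) = 1"
      using prob_space.emeasure_space_1[of "density ?R r"] cr unfolding couplings_def by simp
    have e2: "emeasure (density ?R s) (space ?R) = 1"
      using prob_space.emeasure_space_1[of "density ?R s"] cs unfolding couplings_def by simp
    have "emeasure ?M (space ?R) = 1"
      using me[of "space ?R"] e1 e2 one by simp
    then show "emeasure ?M (space ?M) = 1" by simp
  qed
  moreover have "distr ?M (\<mu> i) (\<lambda>x. x i) = \<mu> i" if i: "i < N" for i
  proof (rule measure_eqI)
    fix A assume A: "A \<in> sets (distr ?M (\<mu> i) (\<lambda>x. x i))"
    then have A': "A \<in> sets (\<mu> i)" by simp
    have meas: "(\<lambda>x. x i) \<in> measurable ?R (\<mu> i)"
      using i by (intro measurable_component_singleton) auto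
    have pre: "(\<lambda>x. x i) -` A \<inter> space ?R \<in> sets ?R" using meas A' by (rule measurable_sets)
    have dr: "emeasure (density ?R r) ((\<lambda>x. x i) -` A \<inter> space ?R) = emeasure (\<mu> i) A"
    proof -
      have "emeasure (distr (density ?R r) (\<mu> i) (\<lambda>x. x i)) A = emeasure (\<mu> i) A"
        using cr i unfolding couplings_def by simp
      then show ?thesis using meas A' by (simp add: emeasure_distr)
    qed
    have ds: "emeasure (density ?R s) ((\<lambda>x. x i) -` A \<inter> space ?R) = emeasure (\<mu> i) A"
    proof -
      have "emeasure (distr (density ?R s) (\<mu> i) (\<lambda>x. x i)) A = emeasure (\<mu> i) A"
        using cs i unfolding couplings_def by simp
      then show ?thesis using meas A' by (simp add: emeasure_distr)
    qed
    have "emeasure (distr ?M (\<mu> i) (\<lambda>x. x i)) A = emeasure ?M ((\<lambda>x. x i) -` A \<inter> space ?R)"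
      using meas A' by (simp add: emeasure_distr)
    also have "\<dots> = (ennreal (1-t) + ennreal t) * emeasure (\<mu> i) A"
      using me[OF pre] dr ds by (simp add: distrib_right)
    finally show "emeasure (distr ?M (\<mu> i) (\<lambda>x. x i)) A = emeasure (\<mu> i) A" using one by simp
  qed simp
  ultimately show ?thesis unfolding couplings_def by auto
qed

lemma obj_density:
  fixes \<rho> c :: "(nat \<Rightarrow> 'a) \<Rightarrow> real"
  assumes "prob_space (\<Pi>\<^sub>M i\<in>{..<N}. \<mu> i)"
    and [measurable]: "\<rho> \<in> borel_measurable (\<Pi>\<^sub>M i\<in>{..<N}. \<mu> i)" "c \<in> borel_measurable (\<Pi>\<^sub>M i\<in>{..<N}. \<mu> i)"
    and nn: "\<And>x. x \<in> space (\<Pi>\<^sub>M i\<in>{..<N}. \<mu> i) \<Longrightarrow> 0 \<le> \<rho> x"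
    and cnn: "\<And>x. x \<in> space (\<Pi>\<^sub>M i\<in>{..<N}. \<mu> i) \<Longrightarrow> 0 \<le> c x"
    and ix: "integrable (\<Pi>\<^sub>M i\<in>{..<N}. \<mu> i) (\<lambda>x. xl (\<rho> x))"
    and ic: "integrable (\<Pi>\<^sub>M i\<in>{..<N}. \<mu> i) (\<lambda>x. \<rho> x * c x)"
  shows "ent_obj N \<mu> c (density (\<Pi>\<^sub>M i\<in>{..<N}. \<mu> i) \<rho>)
     = ereal ((\<integral>x. \<rho> x * c x \<partial>(\<Pi>\<^sub>M i\<in>{..<N}. \<mu> i)) + (\<integral>x. xl (\<rho> x) \<partial>(\<Pi>\<^sub>M i\<in>{..<N}. \<mu> i)))"
  unfolding ent_obj_def using cost_density[OF assms(2,3) nn cnn ic] KL_density[OF assms(1,2) nn ix]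
  by simp

theorem mainTheorem12:
  fixes N :: nat and S :: "nat \<Rightarrow> 'a set" and d :: "nat \<Rightarrow> 'a \<Rightarrow> 'a \<Rightarrow> real"
    and p :: ereal and \<mu> :: "nat \<Rightarrow> 'a measure"
    and c ct :: "(nat \<Rightarrow> 'a) \<Rightarrow> real" and \<pi> \<pi>t :: "(nat \<Rightarrow> 'a) measure"
  assumes polish: "\<And>i. i < N \<Longrightarrow> polish_metric (S i) (d i)"
    and p: "1 \<le> p"
    and mu: "\<And>i. i < N \<Longrightarrow> P_p p (S i) (d i) (\<mu> i)"
    and c_meas: "c \<in> borel_measurable (\<Pi>\<^sub>M i\<in>{..<N}. \<mu> i)"
    and ct_meas: "ct \<in> borel_measurable (\<Pi>\<^sub>M i\<in>{..<N}. \<mu> i)"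
    and c_nonneg: "\<And>x. x \<in> (\<Pi>\<^sub>E i\<in>{..<N}. S i) \<Longrightarrow> 0 \<le> c x"
    and ct_nonneg: "\<And>x. x \<in> (\<Pi>\<^sub>E i\<in>{..<N}. S i) \<Longrightarrow> 0 \<le> ct x"
    and c_growth: "growth_p p N S d c"
    and ct_growth: "growth_p p N S d ct"
    and opt: "is_ent_optimizer N \<mu> c \<pi>"
    and opt_t: "is_ent_optimizer N \<mu> ct \<pi>t"
  shows "KL_div \<pi> \<pi>t + KL_div \<pi>t \<pi> \<le>
           ereal ((\<integral>x. c x - ct x \<partial>\<pi>t) - (\<integral>x. c x - ct x \<partial>\<pi>))"
proof -
  define R where "R = (\<Pi>\<^sub>M i\<in>{..<N}. \<mu> i)"
  note [measurable] = c_meas[folded R_def] ct_meas[folded R_def]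
  have pmu: "\<And>i. i \<in> {..<N} \<Longrightarrow> prob_space (\<mu> i)" using mu by (auto simp: P_p_def)
  have psR: "prob_space R" unfolding R_def by (rule prob_space_PiM) (use pmu in auto)
  interpret R: prob_space R by fact
  have spR: "space R = (\<Pi>\<^sub>E i\<in>{..<N}. S i)" unfolding R_def by (rule space_PiM_S[OF polish mu])
  have cnn: "\<And>x. x \<in> space R \<Longrightarrow> 0 \<le> c x" and ctnn: "\<And>x. x \<in> space R \<Longrightarrow> 0 \<le> ct x"
    using c_nonneg ct_nonneg spR by auto
  have Rc: "R \<in> couplings N \<mu>"
    unfolding couplings_def R_def using psR distr_PiM_component[of "{..<N}" \<mu>] pmu by (auto simp: R_def)
  have intc: "integrable P c" if "P \<in> couplings N \<mu>" for P
    by (rule coupling_int[OF polish p mu c_meas c_growth that])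
  have intct: "integrable P ct" if "P \<in> couplings N \<mu>" for P
    by (rule coupling_int[OF polish p mu ct_meas ct_growth that])
  have cpl: "\<pi> \<in> couplings N \<mu>" "\<pi>t \<in> couplings N \<mu>"
    using opt opt_t by (auto simp: is_ent_optimizer_def)
  have le_c: "ent_obj N \<mu> c \<pi> \<le> ent_obj N \<mu> c P" if "P \<in> couplings N \<mu>" for P
    using opt that unfolding is_ent_optimizer_def S_ent_def by (auto intro: INF_lower)
  have le_ct: "ent_obj N \<mu> ct \<pi>t \<le> ent_obj N \<mu> ct P" if "P \<in> couplings N \<mu>" for P
    using opt_t that unfolding is_ent_optimizer_def S_ent_def by (auto intro: INF_lower)
  have R1: "density R (\<lambda>x. ennreal ((\<lambda>_. 1::real) x)) = R" by (simp add: density_1)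
  have objR: "ent_obj N \<mu> f R \<noteq> \<infinity>" if [measurable]: "f \<in> borel_measurable R"
    and fnn: "\<And>x. x \<in> space R \<Longrightarrow> 0 \<le> f x" and fi: "integrable R f" for f
  proof -
    have "ent_obj N \<mu> f (density R (\<lambda>_. 1::real)) = ereal ((\<integral>x. 1 * f x \<partial>R) + (\<integral>x. xl 1 \<partial>R))"
      unfolding R_def by (rule obj_density) (use psR fnn fi in \<open>auto simp: R_def xl_def\<close>)
    then show ?thesis using R1 by simp
  qed
  have fin: "KL_div P R \<noteq> \<infinity>" if P: "P \<in> couplings N \<mu>" and le: "ent_obj N \<mu> f P \<le> ent_obj N \<mu> f R"
    and fR: "ent_obj N \<mu> f R \<noteq> \<infinity>" for P f
  proof
    assume "KL_div P R = \<infinity>"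
    then have "ent_obj N \<mu> f P = \<infinity>" unfolding ent_obj_def R_def by simp
    then show False using le fR by (simp add: top_unique[where 'a=ereal, simplified])
  qed
  have setsP: "sets P = sets R" if "P \<in> couplings N \<mu>" for P using that by (simp add: couplings_def R_def)
  have psP: "prob_space P" if "P \<in> couplings N \<mu>" for P using that by (simp add: couplings_def)
  define r where "r = (\<lambda>x. enn2real (RN_deriv R \<pi> x))"
  define s where "s = (\<lambda>x. enn2real (RN_deriv R \<pi>t x))"
  have finr: "KL_div \<pi> R \<noteq> \<infinity>"
    by (rule fin[OF cpl(1) le_c[OF Rc] objR]) (use cnn intc[OF Rc] in auto)
  have fins: "KL_div \<pi>t R \<noteq> \<infinity>"
    by (rule fin[OF cpl(2) le_ct[OF Rc] objR]) (use ctnn intct[OF Rc] in auto)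
  have pir: "\<pi> = density R r" and ixr: "integrable R (\<lambda>x. xl (r x))"
    using KL_fin[OF psR psP[OF cpl(1)] setsP[OF cpl(1)] finr] unfolding r_def by auto
  have pis: "\<pi>t = density R s" and ixs: "integrable R (\<lambda>x. xl (s x))"
    using KL_fin[OF psR psP[OF cpl(2)] setsP[OF cpl(2)] fins] unfolding s_def by auto
  have rm[measurable]: "r \<in> borel_measurable R" and sm[measurable]: "s \<in> borel_measurable R" unfolding r_def s_def by auto
  have rnn: "\<And>x. 0 \<le> r x" and snn: "\<And>x. 0 \<le> s x" unfolding r_def s_def by auto
  have nn2: "\<And>x. x \<in> space R \<Longrightarrow> 0 \<le> r x \<and> 0 \<le> s x" using rnn snn by auto
  have nn2': "\<And>x. x \<in> space R \<Longrightarrow> 0 \<le> s x \<and> 0 \<le> r x" using rnn snn by auto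
  have dint: "integrable R (\<lambda>x. g x * f x)" if "integrable (density R g) f" and [measurable]: "g \<in> borel_measurable R"
    "f \<in> borel_measurable R" and gnn: "\<And>x. 0 \<le> g x" for f g
    using that(1) gnn by (subst (asm) integrable_density) auto
  have irc: "integrable R (\<lambda>x. r x * c x)" by (rule dint) (use intc[OF cpl(1)] pir rnn in auto)
  have isc: "integrable R (\<lambda>x. s x * c x)" by (rule dint) (use intc[OF cpl(2)] pis snn in auto)
  have irct: "integrable R (\<lambda>x. r x * ct x)" by (rule dint) (use intct[OF cpl(1)] pir rnn in auto)
  have isct: "integrable R (\<lambda>x. s x * ct x)" by (rule dint) (use intct[OF cpl(2)] pis snn in auto)
  have cplr: "density R r \<in> couplings N \<mu>" and cpls: "density R s \<in> couplings N \<mu>"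
    using cpl pir pis by auto
  have obj: "ent_obj N \<mu> f (density R g) = ereal ((\<integral>x. g x * f x \<partial>R) + (\<integral>x. xl (g x) \<partial>R))"
    if [measurable]: "g \<in> borel_measurable R" "f \<in> borel_measurable R" and "\<And>x. x \<in> space R \<Longrightarrow> 0 \<le> g x"
      "\<And>x. x \<in> space R \<Longrightarrow> 0 \<le> f x" "integrable R (\<lambda>x. xl (g x))" "integrable R (\<lambda>x. g x * f x)" for f g
    using obj_density[of N \<mu> g f] psR that unfolding R_def by auto
  define A where "A = (\<integral>x. s x * c x \<partial>R) - (\<integral>x. r x * c x \<partial>R)"
  define B where "B = (\<integral>x. s x * ct x \<partial>R) - (\<integral>x. r x * ct x \<partial>R)"
  have hA: "(\<integral>x. xl (r x) \<partial>R) - t * A \<le> (\<integral>x. xl ((1-t) * r x + t * s x) \<partial>R)" if t: "0 < t" "t \<le> 1" for t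
  proof -
    let ?m = "\<lambda>x. (1-t) * r x + t * s x"
    have mc: "density R ?m \<in> couplings N \<mu>"
      unfolding R_def by (rule mix_coupling) (use nn2 t cplr cpls rm sm in \<open>auto simp: R_def\<close>)
    have im: "integrable R (\<lambda>x. xl (?m x))" by (rule mix_int[OF psR _ _ nn2 ixr ixs]) (use t in auto)
    have imc: "integrable R (\<lambda>x. ?m x * c x)"
      using irc isc by (simp add: distrib_right mult.assoc)
    have "(\<integral>x. ?m x * c x \<partial>R) = (1-t) * (\<integral>x. r x * c x \<partial>R) + t * (\<integral>x. s x * c x \<partial>R)"
      using irc isc by (simp add: distrib_right mult.assoc)
    moreover have "ent_obj N \<mu> c (density R r) \<le> ent_obj N \<mu> c (density R ?m)"
      using le_c[OF mc] pir by simp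
    moreover have "ent_obj N \<mu> c (density R r) = ereal ((\<integral>x. r x * c x \<partial>R) + (\<integral>x. xl (r x) \<partial>R))"
      by (rule obj) (use nn2 cnn ixr irc in auto)
    moreover have "ent_obj N \<mu> c (density R ?m) = ereal ((\<integral>x. ?m x * c x \<partial>R) + (\<integral>x. xl (?m x) \<partial>R))"
      by (rule obj) (use nn2 cnn im imc t in auto)
    ultimately show ?thesis unfolding A_def by (simp add: algebra_simps)
  qed
  have hB: "(\<integral>x. xl (s x) \<partial>R) + t * B \<le> (\<integral>x. xl ((1-t) * s x + t * r x) \<partial>R)" if t: "0 < t" "t \<le> 1" for t
  proof -
    let ?m = "\<lambda>x. (1-t) * s x + t * r x"
    have mc: "density R ?m \<in> couplings N \<mu>"
      unfolding R_def by (rule mix_coupling) (use nn2' t cplr cpls rm sm in \<open>auto simp: R_def\<close>)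
    have im: "integrable R (\<lambda>x. xl (?m x))" by (rule mix_int[OF psR _ _ nn2' ixs ixr]) (use t in auto)
    have imc: "integrable R (\<lambda>x. ?m x * ct x)"
      using irct isct by (simp add: distrib_right mult.assoc)
    have "(\<integral>x. ?m x * ct x \<partial>R) = (1-t) * (\<integral>x. s x * ct x \<partial>R) + t * (\<integral>x. r x * ct x \<partial>R)"
      using irct isct by (simp add: distrib_right mult.assoc)
    moreover have "ent_obj N \<mu> ct (density R s) \<le> ent_obj N \<mu> ct (density R ?m)"
      using le_ct[OF mc] pis by simp
    moreover have "ent_obj N \<mu> ct (density R s) = ereal ((\<integral>x. s x * ct x \<partial>R) + (\<integral>x. xl (s x) \<partial>R))"
      by (rule obj) (use nn2 ctnn ixs isct in auto)
    moreover have "ent_obj N \<mu> ct (density R ?m) = ereal ((\<integral>x. ?m x * ct x \<partial>R) + (\<integral>x. xl (?m x) \<partial>R))"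
      by (rule obj) (use nn2 ctnn im imc t in auto)
    ultimately show ?thesis unfolding B_def by (simp add: algebra_simps)
  qed
  have co: "(\<integral>\<^sup>+x. kk (r x) (s x) \<partial>R) \<le> ennreal (A - B) \<and> 0 \<le> A - B"
    by (rule core[OF psR _ _ nn2 ixr ixs hA hB]) auto
  have KL: "KL_div (density R r) (density R s) + KL_div (density R s) (density R r) \<le> ereal (A - B)"
    by (rule KL_pair[OF psR _ _ nn2]) (use co cplr cpls psP in auto)
  have i1: "(\<integral>x. c x - ct x \<partial>\<pi>t) = (\<integral>x. s x * c x \<partial>R) - (\<integral>x. s x * ct x \<partial>R)"
    unfolding pis using isc isct snn by (subst integral_density) (auto simp: right_diff_distrib)
  have i2: "(\<integral>x. c x - ct x \<partial>\<pi>) = (\<integral>x. r x * c x \<partial>R) - (\<integral>x. r x * ct x \<partial>R)"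
    unfolding pir using irc irct rnn by (subst integral_density) (auto simp: right_diff_distrib)
  have "(\<integral>x. c x - ct x \<partial>\<pi>t) - (\<integral>x. c x - ct x \<partial>\<pi>) = A - B"
    unfolding i1 i2 A_def B_def by simp
  then show ?thesis using KL pir pis by simp
qed

end
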